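(* If $G$ is a connected graph that is not $\omega$-evadible, then either $G$ is finite or $G$ has a vertex of infinite degree.
   Context: Cat Herding is played on a simple, possibly infinite graph $G$. The cat first places its token on a vertex. Then the players alternate, the herder moving first: the herder deletes one edge of the current graph, and then, unless the cat's current vertex has degree $0$ in the current graph, the cat moves its token along a finite path with at least one edge in the current graph to a different vertex. The cat is captured when its vertex has degree $0$ in the current graph. $G$ is $k$-evadible if the cat has a strategy (including its choice of starting vertex) that, against every herder strategy, yields a legal cat move after each of the first $k-1$ edge deletions; $G$ is $\omega$-evadible if it is $k$-evadible for every $k\in\mathbb{N}$. *)

theory Defs
  imports Main
begin

definition simple_graph :: "'a set \<Rightarrow> 'a set set \<Rightarrow> bool" where
  "simple_graph V E \<longleftrightarrow> (\<forall>e\<in>E. \<exists>x y. x \<noteq> y \<and> x \<in> V \<and> y \<in> V \<and> e = {x, y})"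

definition adj :: "'a set set \<Rightarrow> 'a \<Rightarrow> 'a \<Rightarrow> bool" where
  "adj E x y \<longleftrightarrow> {x, y} \<in> E"

definition connected_graph :: "'a set \<Rightarrow> 'a set set \<Rightarrow> bool" where
  "connected_graph V E \<longleftrightarrow> (\<forall>x\<in>V. \<forall>y\<in>V. (adj E)\<^sup>*\<^sup>* x y)"

definition degree_infinite :: "'a set set \<Rightarrow> 'a \<Rightarrow> bool" where
  "degree_infinite E v \<longleftrightarrow> infinite {w. {v, w} \<in> E}"

text \<open>cat_survives n E v: the cat sits on v, the current edge set is E, the herder is
  about to move; the cat can guarantee a legal move after each of the next n deletions.\<close>
fun cat_survives :: "nat \<Rightarrow> 'a set set \<Rightarrow> 'a \<Rightarrow> bool" where
  "cat_survives 0 E v = True"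
| "cat_survives (Suc n) E v =
     (\<forall>e\<in>E. \<exists>w. w \<noteq> v \<and> (adj (E - {e}))\<^sup>+\<^sup>+ v w \<and> cat_survives n (E - {e}) w)"

definition k_evadible :: "'a set \<Rightarrow> 'a set set \<Rightarrow> nat \<Rightarrow> bool" where
  "k_evadible V E k \<longleftrightarrow> (\<exists>v\<in>V. cat_survives (k - 1) E v)"

definition omega_evadible :: "'a set \<Rightarrow> 'a set set \<Rightarrow> bool" where
  "omega_evadible V E \<longleftrightarrow> (\<forall>k. k_evadible V E k)"

end

theory Submission
  imports Defs
begin

definition chain :: "'a set set \<Rightarrow> 'a list \<Rightarrow> bool" where
  "chain E xs \<longleftrightarrow> (\<forall>k. Suc k < length xs \<longrightarrow> {xs!k, xs!Suc k} \<in> E)"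

definition good :: "nat \<Rightarrow> 'a set set \<Rightarrow> 'a list \<Rightarrow> nat \<Rightarrow> bool" where
  "good n E xs i \<longleftrightarrow> distinct xs \<and> chain E xs \<and> 2^n \<le> i \<and> i + 2^n < length xs"

lemma chain_trancl:
  assumes "chain E ys" "a < b" "b < length ys"
  shows "(adj E)\<^sup>+\<^sup>+ (ys!a) (ys!b)"
  using assms
proof (induction b)
  case 0 then show ?case by simp
next
  case (Suc b)
  have e: "adj E (ys!b) (ys!Suc b)" using Suc.prems unfolding chain_def adj_def by auto
  show ?case
  proof (cases "a = b")
    case True then show ?thesis using e by auto
  next
    case False
    then have "(adj E)\<^sup>+\<^sup>+ (ys!a) (ys!b)" using Suc by auto
    then show ?thesis using e by auto
  qed
qed

lemma chain_rev: "chain E (rev xs) \<longleftrightarrow> chain E xs"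
proof -
  have "chain E xs" if "chain E (rev xs)" for xs :: "'a list"
    unfolding chain_def
  proof (intro allI impI)
    fix k assume k: "Suc k < length xs"
    have "{rev xs ! (length xs - Suc (Suc k)), rev xs ! Suc (length xs - Suc (Suc k))} \<in> E"
      using that k unfolding chain_def by auto
    moreover have "rev xs ! (length xs - Suc (Suc k)) = xs ! Suc k" using k by (simp add: rev_nth)
    moreover have "rev xs ! Suc (length xs - Suc (Suc k)) = xs ! k" using k
      by (simp add: rev_nth Suc_diff_Suc)
    ultimately show "{xs!k, xs!Suc k} \<in> E" by (simp add: insert_commute)
  qed
  from this[of xs] this[of "rev xs"] show ?thesis by auto
qed

lemma key_right:
  assumes g: "good (Suc n) E xs i" and c: "chain (E - {e}) (drop i xs)"
  shows "\<exists>ys j. xs!(i + 2^n) \<noteq> xs!i \<and> (adj (E-{e}))\<^sup>+\<^sup>+ (xs!i) (xs!(i+2^n))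
           \<and> good n (E-{e}) ys j \<and> ys!j = xs!(i+2^n)"
proof -
  have d: "distinct xs" and len: "i + 2^Suc n < length xs" using g unfolding good_def by auto
  have "xs!(i + 2^n) \<noteq> xs!i" using d len by (simp add: nth_eq_iff_index_eq)
  moreover have "(adj (E-{e}))\<^sup>+\<^sup>+ (drop i xs ! 0) (drop i xs ! (2^n))"
    by (rule chain_trancl[OF c]) (use len in auto)
  moreover have "good n (E-{e}) (drop i xs) (2^n)"
    unfolding good_def using d c len by auto
  ultimately show ?thesis using len by (intro exI[of _ "drop i xs"] exI[of _ "2^n"]) auto
qed

lemma key:
  assumes g: "good (Suc n) E xs i"
  shows "\<exists>w ys j. w \<noteq> xs!i \<and> (adj (E-{e}))\<^sup>+\<^sup>+ (xs!i) w \<and> good n (E-{e}) ys j \<and> ys!j = w"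
proof -
  have d: "distinct xs" and ch: "chain E xs" and len: "i + 2^Suc n < length xs"
    and ge: "2^Suc n \<le> i" using g unfolding good_def by auto
  have "chain (E - {e}) (drop i xs) \<or> chain (E - {e}) (take (Suc i) xs)"
  proof (rule ccontr)
    assume "\<not> ?thesis"
    then obtain p q where p: "Suc p < length (drop i xs)" "{drop i xs!p, drop i xs!Suc p} \<notin> E - {e}"
      and q: "Suc q < length (take (Suc i) xs)" "{take (Suc i) xs!q, take (Suc i) xs!Suc q} \<notin> E - {e}"
      unfolding chain_def by blast
    have p': "{xs!(i+p), xs!Suc (i+p)} = e" using p ch unfolding chain_def by auto
    have q': "{xs!q, xs!Suc q} = e" "q < i" using q ch unfolding chain_def by auto
    have lp: "Suc (i+p) < length xs" using p by auto
    have "xs!(i+p) \<in> {xs!q, xs!Suc q}" using p' q' by auto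
    then have "i + p = q \<or> i + p = Suc q" using d lp q' by (auto simp: nth_eq_iff_index_eq)
    then have ip: "i + p = Suc q" using q' by auto
    have "xs!Suc (i+p) \<in> {xs!q, xs!Suc q}" using p' q' by auto
    then show False using d lp ip by (auto simp: nth_eq_iff_index_eq)
  qed
  then show ?thesis
  proof
    assume "chain (E - {e}) (drop i xs)"
    from key_right[OF g this] show ?thesis by blast
  next
    assume c: "chain (E - {e}) (take (Suc i) xs)"
    define i' where "i' = length xs - Suc i"
    have g': "good (Suc n) E (rev xs) i'"
      using d ch len ge unfolding good_def i'_def by (auto simp: chain_rev)
    have "drop i' (rev xs) = rev (take (Suc i) xs)" unfolding i'_def
      using len by (simp add: rev_take)
    then have "chain (E - {e}) (drop i' (rev xs))" using c by (simp add: chain_rev)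
    from key_right[OF g' this] have "\<exists>w ys j. w \<noteq> rev xs!i' \<and> (adj (E-{e}))\<^sup>+\<^sup>+ (rev xs!i') w \<and> good n (E-{e}) ys j \<and> ys!j = w"
      by blast
    moreover have "rev xs ! i' = xs ! i" unfolding i'_def using len by (simp add: rev_nth)
    ultimately show ?thesis by simp
  qed
qed

lemma good_survives: "good n E xs i \<Longrightarrow> cat_survives n E (xs!i)"
proof (induction n arbitrary: E xs i)
  case 0 then show ?case by simp
next
  case (Suc n)
  show ?case
  proof (simp, intro ballI)
    fix e assume "e \<in> E"
    from key[OF Suc.prems, of e] obtain w ys j where
      "w \<noteq> xs!i" "(adj (E-{e}))\<^sup>+\<^sup>+ (xs!i) w" "good n (E-{e}) ys j" "ys!j = w" by blast
    then show "\<exists>w. w \<noteq> xs ! i \<and> (adj (E - {e}))\<^sup>+\<^sup>+ (xs ! i) w \<and> cat_survives n (E - {e}) w"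
      using Suc.IH by blast
  qed
qed

lemma path_of_rtranclp:
  assumes "(adj E)\<^sup>*\<^sup>* r x"
  shows "\<exists>xs. xs \<noteq> [] \<and> hd xs = r \<and> last xs = x \<and> distinct xs \<and> chain E xs"
  using assms
proof (induction rule: rtranclp_induct)
  case base
  then show ?case by (intro exI[of _ "[r]"]) (auto simp: chain_def)
next
  case (step y z)
  then obtain xs where xs: "xs \<noteq> []" "hd xs = r" "last xs = y" "distinct xs" "chain E xs" by blast
  show ?case
  proof (cases "z \<in> set xs")
    case True
    then obtain j where j: "j < length xs" "xs!j = z" by (auto simp: in_set_conv_nth)
    have "take (Suc j) xs \<noteq> []" "hd (take (Suc j) xs) = r" using xs j by (auto simp: hd_take)
    moreover have "last (take (Suc j) xs) = z" using j by (simp add: take_Suc_conv_app_nth)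
    moreover have "distinct (take (Suc j) xs)" using xs by simp
    moreover have "chain E (take (Suc j) xs)" using xs(5) unfolding chain_def by auto
    ultimately show ?thesis by blast
  next
    case False
    have "chain E (xs @ [z])" unfolding chain_def
    proof (intro allI impI)
      fix k assume k: "Suc k < length (xs @ [z])"
      show "{(xs @ [z]) ! k, (xs @ [z]) ! Suc k} \<in> E"
      proof (cases "Suc k < length xs")
        case True then show ?thesis using xs(5) unfolding chain_def by (auto simp: nth_append)
      next
        case False
        then have "Suc k = length xs" using k by auto
        then have "xs ! k = last xs" using xs(1) by (metis diff_Suc_1 last_conv_nth)
        then show ?thesis using \<open>Suc k = length xs\<close> step(2) xs(3) by (auto simp: nth_append adj_def)
      qed
    qed
    then show ?thesis using xs False by (intro exI[of _ "xs @ [z]"]) auto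
  qed
qed

lemma chain_relpow:
  assumes "xs \<noteq> []" "chain E xs"
  shows "(adj E ^^ (length xs - 1)) (hd xs) (last xs)"
  using assms
proof (induction xs rule: rev_induct)
  case Nil then show ?case by simp
next
  case (snoc a xs)
  show ?case
  proof (cases "xs = []")
    case True then show ?thesis by simp
  next
    case False
    have c: "chain E xs" unfolding chain_def
    proof (intro allI impI)
      fix k assume k: "Suc k < length xs"
      then have "{(xs@[a])!k, (xs@[a])!Suc k} \<in> E" using snoc.prems unfolding chain_def by simp
      then show "{xs ! k, xs ! Suc k} \<in> E" using k by (simp add: nth_append)
    qed
    have "{xs ! (length xs - 1), (xs@[a]) ! length xs} \<in> E"
      using snoc.prems False unfolding chain_def
      by (metis (no_types, lifting) Suc_diff_1 length_append_singleton length_greater_0_conv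
          lessI nth_append)
    then have "adj E (last xs) a" using False by (simp add: adj_def last_conv_nth)
    moreover have "(adj E ^^ (length xs - 1)) (hd xs) (last xs)" using snoc.IH False c by blast
    ultimately show ?thesis using False
      by (cases "length xs") auto
  qed
qed

lemma finite_ball:
  assumes fin: "\<And>y. finite {z. {y,z} \<in> E}"
  shows "finite {x. \<exists>k\<le>d. (adj E ^^ k) r x}"
proof (induction d)
  case 0 then show ?case by simp
next
  case (Suc d)
  let ?B = "{x. \<exists>k\<le>d. (adj E ^^ k) r x}"
  have "{x. \<exists>k\<le>Suc d. (adj E ^^ k) r x} \<subseteq> ?B \<union> (\<Union>y\<in>?B. {z. {y,z} \<in> E})"
  proof
    fix x assume "x \<in> {x. \<exists>k\<le>Suc d. (adj E ^^ k) r x}"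
    then obtain k where k: "k \<le> Suc d" "(adj E ^^ k) r x" by auto
    show "x \<in> ?B \<union> (\<Union>y\<in>?B. {z. {y,z} \<in> E})"
    proof (cases "k \<le> d")
      case True then show ?thesis using k by auto
    next
      case False
      then have "k = Suc d" using k by auto
      then obtain y where "(adj E ^^ d) r y" "adj E y x" using k by auto
      then show ?thesis by (auto simp: adj_def)
    qed
  qed
  moreover have "finite (?B \<union> (\<Union>y\<in>?B. {z. {y,z} \<in> E}))" using Suc fin by auto
  ultimately show ?case by (rule finite_subset)
qed

theorem mainTheorem20:
  fixes V :: "'a set" and E :: "'a set set"
  assumes "simple_graph V E"
    and "connected_graph V E"
    and "\<not> omega_evadible V E"
  shows "finite V \<or> (\<exists>v\<in>V. degree_infinite E v)"
proof (rule ccontr)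
  assume "\<not> ?thesis"
  then have infV: "infinite V" and degf: "\<And>v. v \<in> V \<Longrightarrow> finite {w. {v, w} \<in> E}"
    unfolding degree_infinite_def by auto
  have fin: "finite {z. {y,z} \<in> E}" for y
  proof (cases "y \<in> V")
    case True then show ?thesis using degf by auto
  next
    case False
    have "{z. {y,z} \<in> E} = {}"
    proof (rule ccontr)
      assume "{z. {y,z} \<in> E} \<noteq> {}"
      then obtain z where "{y,z} \<in> E" by auto
      then show False using assms(1) False unfolding simple_graph_def by (metis doubleton_eq_iff)
    qed
    then show ?thesis by simp
  qed
  obtain r where r: "r \<in> V" using infV by (metis finite.emptyI ex_in_conv)
  have long: "\<exists>xs. distinct xs \<and> chain E xs \<and> N < length xs" for N
  proof -
    have "finite {x. \<exists>k\<le>N. (adj E ^^ k) r x}" by (rule finite_ball[OF fin])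
    then obtain x where x: "x \<in> V" "x \<notin> {x. \<exists>k\<le>N. (adj E ^^ k) r x}"
      using infV by (metis finite_subset subsetI)
    have "(adj E)\<^sup>*\<^sup>* r x" using assms(2) r x unfolding connected_graph_def by auto
    from path_of_rtranclp[OF this] obtain xs where
      xs: "xs \<noteq> []" "hd xs = r" "last xs = x" "distinct xs" "chain E xs" by blast
    have "(adj E ^^ (length xs - 1)) r x" using chain_relpow[OF xs(1) xs(5)] xs by simp
    then have "\<not> length xs - 1 \<le> N" using x by auto
    then show ?thesis using xs by auto
  qed
  have "k_evadible V E k" for k
  proof -
    define n where "n = k - 1"
    obtain xs where xs: "distinct xs" "chain E xs" "2^Suc n < length xs" using long by blast
    have g: "good n E xs (2^n)" using xs unfolding good_def by auto
    have "(1::nat) \<le> 2^n" by simp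
    moreover have "(2::nat)^Suc n = 2^n + 2^n" by simp
    ultimately have "Suc (2^n) < length xs" using xs(3) by linarith
    moreover have c: "\<forall>k. Suc k < length xs \<longrightarrow> {xs!k, xs!Suc k} \<in> E" using xs(2) unfolding chain_def .
    ultimately have eE: "{xs!(2^n), xs!Suc (2^n)} \<in> E" by simp
    obtain a b where ab: "a \<in> V" "b \<in> V" "{xs!(2^n), xs!Suc (2^n)} = {a, b}"
      using assms(1) eE unfolding simple_graph_def by meson
    have inV: "xs!(2^n) \<in> V" using ab by (metis insertCI insertE singletonD)
    have "cat_survives (k - 1) E (xs!(2^n))" using good_survives[OF g] unfolding n_def .
    then show ?thesis using inV unfolding k_evadible_def by (rule_tac bexI)
  qed
  then show False using assms(3) unfolding omega_evadible_def by blast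
qed

end
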